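(* The Kaplan–Meier policy $\pi^{\mathrm{KM}}_{\bm n}$ is piecewise-separable with respect to $\bm x$, with $\mathcal X_0=\emptyset$ and $\mathcal X_k=\{x_1,\dots,x_k\}$ for every $k\in\{1,\dots,K\}$. That is, for each $k\in\{0,\dots,K\}$ there is a continuous (in fact polynomial) function $P_k:[0,1]^k\times[0,1]\to[0,1]$ such that for every $F\in\Delta([0,1])$ and every $z\in[x_k,x_{k+1})$, $$\mathbb P_{\bm D\sim F^n}\big(\pi^{\mathrm{KM}}_{\bm n}(\bm x,\bm I)\le z\big)=P_k\big(F(x_1),\dots,F(x_k),F(z)\big).$$
   Context: Setup: $c_u,c_o>0$, $q=c_u/(c_u+c_o)$. $K\ge1$, $0\le x_1\le\cdots\le x_K\le1$, $x_0:=0$, $x_{K+1}:=1$, $\bm n\in\mathbb N^K$, $n=\sum_k n_k$. $\Delta([0,1])$ = probability distributions on $[0,1]$ identified with right-continuous CDFs. Demands $D^{(k)}_i$ ($k\in[K]$, $i\in[n_k]$) i.i.d. from $F$ ($\bm D\sim F^n$); sales $S^{(k)}_i=\min\{D^{(k)}_i,x_k\}$; indicators $\delta^{(k)}_i=\mathbb 1(D^{(k)}_i\le x_k)$; $\bm I$ the collection of $(S^{(k)}_i,\delta^{(k)}_i)$. Kaplan–Meier policy: let $Y_1\le\cdots\le Y_n$ be the sorted sales values, ties broken by placing uncensored observations ($\delta=1$) before censored ones, and let $\zeta_i=1$ if $Y_i$ is an uncensored observation and $0$ otherwise. Define $\hat F_{\mathrm{KM}}(z)=1-\prod_{i:Y_i\le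 z}\big(\frac{n-i}{n-i+1}\big)^{\zeta_i}$ for $z<1$ and $\hat F_{\mathrm{KM}}(1)=1$, and $\pi^{\mathrm{KM}}_{\bm n}(\bm x,\bm I)=\inf\{u\in[0,1]:\hat F_{\mathrm{KM}}(u)\ge q\}$. Piecewise-separable: a policy $\pi_{\bm n}$ is piecewise-separable w.r.t. $\bm x$ if for each $k\in\{0,\dots,K\}$ there are $\mathcal X_k\subseteq\{x_0,\dots,x_K\}$ and a continuous $P_k:[0,1]^{|\mathcal X_k|}\times[0,1]\to[0,1]$ with $\mathbb P_{\bm D\sim F^n}(\pi_{\bm n}(\bm x,\bm I)\le z)=P_k(F(\mathcal X_k),F(z))$ for all $F\in\Delta([0,1])$ and all $z\in[x_k,x_{k+1})$, where $F(\mathcal X_k)$ is the vector of $F(x_j)$, $x_j\in\mathcal X_k$. *)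

theory Defs
  imports "HOL-Probability.Probability"
begin

definition xb :: "nat \<Rightarrow> (nat \<Rightarrow> real) \<Rightarrow> nat \<Rightarrow> real" where
  "xb K x k = (if k = 0 then 0 else if k = Suc K then 1 else x k)"

definition dem_idx :: "nat \<Rightarrow> (nat \<Rightarrow> nat) \<Rightarrow> (nat \<times> nat) set" where
  "dem_idx K nn = {(k, i). k \<in> {1..K} \<and> i \<in> {1..nn k}}"

text \<open>A distribution in Delta([0,1]): a Borel probability measure on the reals
  concentrated on [0,1]; its CDF is F(z) = measure M {..z}.\<close>
definition is_demand_dist :: "real measure \<Rightarrow> bool" where
  "is_demand_dist M \<longleftrightarrow> prob_space M \<and> sets M = sets borel \<and> emeasure M {0..1} = 1"

definition cdf_of :: "real measure \<Rightarrow> real \<Rightarrow> real" where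
  "cdf_of M z = measure M {..z}"

definition observations ::
  "nat \<Rightarrow> (nat \<Rightarrow> real) \<Rightarrow> (nat \<Rightarrow> nat) \<Rightarrow> (nat \<times> nat \<Rightarrow> real) \<Rightarrow> (real \<times> bool) list" where
  "observations K x nn D =
     concat (map (\<lambda>k. map (\<lambda>i. (min (D (k, i)) (x k), D (k, i) \<le> x k)) [1..<Suc (nn k)]) [1..<Suc K])"

text \<open>Sort by sales value; ties: uncensored (True) before censored (False).
  Realised by a stable sort (sort_key is stable) on fst of the list that places all
  uncensored observations before all censored ones.\<close>
definition km_sorted :: "(real \<times> bool) list \<Rightarrow> (real \<times> bool) list" where
  "km_sorted obs = sort_key fst (filter snd obs @ filter (\<lambda>ob. \<not> snd ob) obs)"

text \<open>Kaplan--Meier CDF estimate, with Y_i = fst (ys ! (i-1)), zeta_i = snd (ys ! (i-1)).\<close>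
definition km_cdf :: "(real \<times> bool) list \<Rightarrow> real \<Rightarrow> real" where
  "km_cdf obs z =
     (if z < 1 then
        (let ys = km_sorted obs; N = length ys in
          1 - (\<Prod>i\<in>{1..N}. if fst (ys ! (i - 1)) \<le> z
                 then (real (N - i) / real (N - i + 1)) ^ (if snd (ys ! (i - 1)) then 1 else 0)
                 else 1))
      else 1)"

definition km_policy :: "real \<Rightarrow> (real \<times> bool) list \<Rightarrow> real" where
  "km_policy q obs = Inf {u \<in> {0..1}. q \<le> km_cdf obs u}"

text \<open>Domain [0,1]^k x [0,1] for P_k, with the k arguments stored in coordinates 1..k
  of a vector nat => real (product topology), all other coordinates 0.\<close>
definition pw_dom :: "nat \<Rightarrow> ((nat \<Rightarrow> real) \<times> real) set" where
  "pw_dom k = {(v, t). (\<forall>j. (j \<in> {1..k} \<longrightarrow> v j \<in> {0..1}) \<and> (j \<notin> {1..k} \<longrightarrow> v j = 0))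
                        \<and> t \<in> {0..1}}"

end

theory Submission
  imports Defs
begin


datatype kk = KK real bool

instantiation kk :: linorder
begin
fun less_eq_kk :: "kk \<Rightarrow> kk \<Rightarrow> bool" where
  "less_eq_kk (KK a b) (KK c d) = (a < c \<or> a = c \<and> b \<le> d)"
fun less_kk :: "kk \<Rightarrow> kk \<Rightarrow> bool" where
  "less_kk (KK a b) (KK c d) = (a < c \<or> a = c \<and> b < d)"
instance
proof
  fix x y z :: kk
  show "(x < y) = (x \<le> y \<and> \<not> y \<le> x)" by (cases x; cases y) auto
  show "x \<le> x" by (cases x) auto
  show "x \<le> y \<Longrightarrow> y \<le> z \<Longrightarrow> x \<le> z" by (cases x; cases y; cases z) auto
  show "x \<le> y \<Longrightarrow> y \<le> x \<Longrightarrow> x = y" by (cases x; cases y) auto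
  show "x \<le> y \<or> y \<le> x" by (cases x; cases y) auto
qed
end


definition gk :: "real \<times> bool \<Rightarrow> kk" where
  "gk p = KK (fst p) (\<not> snd p)"

lemma inj_gk: "inj gk"
  by (auto simp: inj_def gk_def prod_eq_iff)

lemma sort_key_inj_unique:
  assumes "inj f" "mset ys = mset xs" "sorted (map f ys)"
  shows "sort_key f xs = ys"
proof (rule properties_for_sort_key[OF assms(2) _ assms(3)])
  fix k
  have e: "(\<lambda>x. f k = f x) = (\<lambda>x. k = x)" using assms(1) by (auto simp: inj_def)
  have "mset (filter (\<lambda>x. k = x) ys) = mset (filter (\<lambda>x. k = x) xs)"
    using assms(2) by (metis mset_filter)
  then have L: "length (filter (\<lambda>x. k = x) ys) = length (filter (\<lambda>x. k = x) xs)"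
    by (metis size_mset)
  have "filter (\<lambda>x. k = x) ys = replicate (length (filter (\<lambda>x. k = x) ys)) k"
    by (rule replicate_length_same[symmetric]) auto
  also have "\<dots> = replicate (length (filter (\<lambda>x. k = x) xs)) k" using L by simp
  also have "\<dots> = filter (\<lambda>x. k = x) xs"
    by (rule replicate_length_same) auto
  finally have "filter (\<lambda>x. k = x) ys = filter (\<lambda>x. k = x) xs" .
  then show "filter (\<lambda>x. f k = f x) ys = filter (\<lambda>x. f k = f x) xs" by (simp add: e)
qed

lemma insort_lex:
  fixes f :: "'a \<Rightarrow> real"
  assumes "sorted (map (\<lambda>p. KK (f p) (h p)) ys)" "\<forall>y\<in>set ys. h x \<le> h y"
  shows "sorted (map (\<lambda>p. KK (f p) (h p)) (insort_key f x ys))"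
  using assms
proof (induction ys)
  case Nil then show ?case by simp
next
  case (Cons y ys)
  show ?case
  proof (cases "f x \<le> f y")
    case True
    have 1: "KK (f x) (h x) \<le> KK (f y) (h y)" using True Cons.prems(2) by (simp add: less_le)
    have 2: "\<forall>z\<in>set ys. KK (f y) (h y) \<le> KK (f z) (h z)" using Cons.prems(1) by simp
    have 3: "\<forall>z\<in>set ys. KK (f x) (h x) \<le> KK (f z) (h z)" using 1 2 order_trans by blast
    show ?thesis using True Cons.prems(1) 1 3 by simp
  next
    case False
    have IH: "sorted (map (\<lambda>p. KK (f p) (h p)) (insort_key f x ys))" using Cons by simp
    have "\<forall>z\<in>set (insort_key f x ys). KK (f y) (h y) \<le> KK (f z) (h z)"
    proof
      fix z assume "z \<in> set (insort_key f x ys)"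
      then have "z = x \<or> z \<in> set ys" by (simp add: set_insort_key)
      then show "KK (f y) (h y) \<le> KK (f z) (h z)"
      proof
        assume "z = x" then show ?thesis using False by simp
      next
        assume "z \<in> set ys" then show ?thesis using Cons.prems(1) by simp
      qed
    qed
    then show ?thesis using False IH by simp
  qed
qed

lemma sort_lex:
  fixes h :: "'a \<Rightarrow> bool"
  assumes "sorted (map h xs)"
  shows "sorted (map (\<lambda>p. KK (f p) (h p)) (sort_key f xs))"
  using assms
proof (induction xs)
  case Nil then show ?case by simp
next
  case (Cons x xs)
  then show ?case by (auto intro!: insort_lex)
qed

lemma km_sorted_eq: "km_sorted obs = sort_key gk obs"
proof -
  let ?L = "filter snd obs @ filter (\<lambda>ob. \<not> snd ob) obs"
  have "sorted (map (\<lambda>p. \<not> snd p) ?L)"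
    unfolding sorted_wrt_map sorted_wrt_append
  proof (intro conjI)
    show "sorted_wrt (\<lambda>x y. (\<not> snd x) \<le> (\<not> snd y)) (filter snd obs)"
      by (induction obs) auto
    show "sorted_wrt (\<lambda>x y. (\<not> snd x) \<le> (\<not> snd y)) (filter (\<lambda>ob. \<not> snd ob) obs)"
      by (induction obs) auto
  qed auto
  then have "sorted (map (\<lambda>p. KK (fst p) (\<not> snd p)) (sort_key fst ?L))" by (rule sort_lex)
  then have s: "sorted (map gk (sort_key fst ?L))" by (simp add: gk_def[abs_def])
  have "mset (sort_key fst ?L) = mset obs" by simp
  then show ?thesis unfolding km_sorted_def
    using sort_key_inj_unique[OF inj_gk _ s, of obs] by simp
qed

lemma term_eq: "(if c then (r::real) ^ (if d then 1 else 0) else 1) = (if c \<and> d then r else 1)"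
  by simp

lemma km_cdf_map:
  assumes z: "z < 1" and a: "a < 1"
    and mono: "\<forall>p\<in>set obs. \<forall>p'\<in>set obs. gk p \<le> gk p' \<longrightarrow> gk (\<psi> p) \<le> gk (\<psi> p')"
    and beta: "\<forall>p\<in>set obs. (fst (\<psi> p) \<le> a \<and> snd (\<psi> p)) = (fst p \<le> z \<and> snd p)"
  shows "km_cdf (map \<psi> obs) a = km_cdf obs z"
proof -
  define ys where "ys = sort_key gk obs"
  have sy: "set ys = set obs" by (simp add: ys_def)
  have "sorted_wrt (\<lambda>p p'. gk p \<le> gk p') ys"
    unfolding ys_def by (metis sorted_map sorted_sort_key)
  then have "sorted_wrt (\<lambda>p p'. gk (\<psi> p) \<le> gk (\<psi> p')) ys"
    by (rule sorted_wrt_mono_rel[rotated]) (use mono sy in auto)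
  then have s2: "sorted (map gk (map \<psi> ys))" by (simp add: sorted_map sorted_wrt_map)
  have m2: "mset (map \<psi> ys) = mset (map \<psi> obs)" by (simp add: ys_def)
  have e2: "km_sorted (map \<psi> obs) = map \<psi> ys"
    unfolding km_sorted_eq using sort_key_inj_unique[OF inj_gk m2 s2] .
  have e1: "km_sorted obs = ys" by (simp add: km_sorted_eq ys_def)
  let ?r = "\<lambda>i. real (length ys - i) / real (length ys - i + 1)"
  have T: "(if fst (map \<psi> ys ! (i - 1)) \<le> a then ?r i ^ (if snd (map \<psi> ys ! (i - 1)) then 1 else 0) else 1)
        = (if fst (ys ! (i - 1)) \<le> z then ?r i ^ (if snd (ys ! (i - 1)) then 1 else 0) else 1)"
    if i: "i \<in> {1..length ys}" for i
  proof -
    from i have lt: "i - 1 < length ys" by auto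
    then have mem: "ys ! (i - 1) \<in> set obs" using sy nth_mem by blast
    have e: "map \<psi> ys ! (i - 1) = \<psi> (ys ! (i - 1))" using lt by simp
    show ?thesis unfolding e term_eq using beta[rule_format, OF mem] by simp
  qed
  have "(\<Prod>i\<in>{1..length ys}. (if fst (map \<psi> ys ! (i - 1)) \<le> a then ?r i ^ (if snd (map \<psi> ys ! (i - 1)) then 1 else 0) else 1))
      = (\<Prod>i\<in>{1..length ys}. (if fst (ys ! (i - 1)) \<le> z then ?r i ^ (if snd (ys ! (i - 1)) then 1 else 0) else 1))"
    by (rule prod.cong[OF refl T])
  moreover have len: "length (map \<psi> ys) = length ys" by simp
  ultimately show ?thesis
    unfolding km_cdf_def e1 e2 Let_def len using z a by simp
qed



definition kfac :: "(real \<times> bool) list \<Rightarrow> real \<Rightarrow> nat \<Rightarrow> real" where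
  "kfac ys u i = (if fst (ys ! (i - 1)) \<le> u
                 then (real (length ys - i) / real (length ys - i + 1)) ^ (if snd (ys ! (i - 1)) then 1 else 0)
                 else 1)"

lemma km_cdf_alt: "km_cdf obs u = (if u < 1 then 1 - (\<Prod>i\<in>{1..length (km_sorted obs)}. kfac (km_sorted obs) u i) else 1)"
  unfolding km_cdf_def kfac_def Let_def by simp

lemma kfac_bounds: "0 \<le> kfac ys u i" "kfac ys u i \<le> 1"
  unfolding kfac_def by (auto intro!: power_le_one divide_le_eq_1_pos[THEN iffD2])

lemma kfac_mono: "u \<le> u' \<Longrightarrow> kfac ys u' i \<le> kfac ys u i"
  using kfac_bounds[of ys u' i] unfolding kfac_def by auto

lemma km_cdf_le1: "km_cdf obs u \<le> 1"
  unfolding km_cdf_alt using kfac_bounds by (simp add: prod_nonneg)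

lemma km_cdf_mono:
  assumes "u \<le> u'" shows "km_cdf obs u \<le> km_cdf obs u'"
proof (cases "u' < 1")
  case True
  then have "u < 1" using assms by simp
  have "(\<Prod>i\<in>{1..length (km_sorted obs)}. kfac (km_sorted obs) u' i)
        \<le> (\<Prod>i\<in>{1..length (km_sorted obs)}. kfac (km_sorted obs) u i)"
    by (rule prod_mono) (use kfac_bounds kfac_mono[OF assms] in auto)
  then show ?thesis unfolding km_cdf_alt using True \<open>u < 1\<close> by simp
next
  case False
  then show ?thesis using km_cdf_le1[of obs u] unfolding km_cdf_alt[of obs u'] by simp
qed

lemma km_cdf_rc:
  assumes "z < 1"
  shows "\<exists>e>0. \<forall>u. z \<le> u \<and> u < z + e \<longrightarrow> km_cdf obs u = km_cdf obs z"
proof -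
  define T where "T = insert 1 (fst ` set (km_sorted obs) \<inter> {z<..})"
  have fT: "finite T" unfolding T_def by auto
  have gt: "\<forall>t\<in>T. z < t" unfolding T_def using assms by auto
  define e where "e = Min T - z"
  have "Min T \<in> T" by (rule Min_in[OF fT]) (simp add: T_def)
  then have e: "e > 0" unfolding e_def using gt by auto
  have "km_cdf obs u = km_cdf obs z" if u: "z \<le> u" "u < z + e" for u
  proof -
    have u1: "u < 1" using u Min_le[OF fT, of 1] unfolding e_def T_def by auto
    have "kfac (km_sorted obs) u i = kfac (km_sorted obs) z i" if i: "i \<in> {1..length (km_sorted obs)}" for i
    proof -
      have mem: "km_sorted obs ! (i - 1) \<in> set (km_sorted obs)" using i by auto
      have "fst (km_sorted obs ! (i - 1)) \<le> u \<longleftrightarrow> fst (km_sorted obs ! (i - 1)) \<le> z"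
      proof
        assume le: "fst (km_sorted obs ! (i - 1)) \<le> u"
        show "fst (km_sorted obs ! (i - 1)) \<le> z"
        proof (rule ccontr)
          assume "\<not> ?thesis"
          then have "fst (km_sorted obs ! (i - 1)) \<in> T" unfolding T_def using mem by simp
          then have "Min T \<le> fst (km_sorted obs ! (i - 1))" using fT by simp
          then show False using le u unfolding e_def by simp
        qed
      qed (use u in simp)
      then show ?thesis unfolding kfac_def by simp
    qed
    then have "(\<Prod>i\<in>{1..length (km_sorted obs)}. kfac (km_sorted obs) u i)
        = (\<Prod>i\<in>{1..length (km_sorted obs)}. kfac (km_sorted obs) z i)"
      by (rule prod.cong[OF refl])
    then show ?thesis unfolding km_cdf_alt using u1 assms by simp
  qed
  then show ?thesis using e by blast
qed

lemma km_policy_iff: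
  assumes "0 \<le> z" "z < 1" "q \<le> 1"
  shows "km_policy q obs \<le> z \<longleftrightarrow> q \<le> km_cdf obs z"
proof -
  let ?A = "{u \<in> {0..1}. q \<le> km_cdf obs u}"
  have bdd: "bdd_below ?A" by (rule bdd_belowI[of _ 0]) auto
  have one: "1 \<in> ?A" using assms by (simp add: km_cdf_def)
  show ?thesis
  proof
    assume "q \<le> km_cdf obs z"
    then have "z \<in> ?A" using assms by auto
    then show "km_policy q obs \<le> z" unfolding km_policy_def by (rule cInf_lower[OF _ bdd])
  next
    assume le: "km_policy q obs \<le> z"
    show "q \<le> km_cdf obs z"
    proof (rule ccontr)
      assume lt: "\<not> ?thesis"
      obtain e where e: "e > 0" "\<forall>u. z \<le> u \<and> u < z + e \<longrightarrow> km_cdf obs u = km_cdf obs z"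
        using km_cdf_rc[OF assms(2)] by blast
      have "z + e / 2 \<le> u" if u: "u \<in> ?A" for u
      proof (rule ccontr)
        assume "\<not> ?thesis"
        then have "u < z + e" using e(1) by simp
        have "km_cdf obs u < q"
        proof (cases "u \<le> z")
          case True then show ?thesis using km_cdf_mono[OF True, of obs] lt by simp
        next
          case False
          then have "km_cdf obs u = km_cdf obs z" using e(2)[rule_format, of u] \<open>u < z + e\<close> by linarith
          then show ?thesis using lt by simp
        qed
        then show False using u by simp
      qed
      then have "z + e / 2 \<le> km_policy q obs" unfolding km_policy_def
        using one by (intro cInf_greatest) auto
      then show False using le e(1) by simp
    qed
  qed
qed



definition Wf :: "nat \<Rightarrow> (nat \<Rightarrow> real) \<Rightarrow> nat \<Rightarrow> real \<Rightarrow> nat \<Rightarrow> real" where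
  "Wf K x k z j = (if j \<le> k then xb K x j else z)"
definition cc :: "nat \<Rightarrow> (nat \<Rightarrow> real) \<Rightarrow> nat \<Rightarrow> real \<Rightarrow> real \<Rightarrow> nat" where
  "cc K x k z y = Suc (card {j\<in>{1..Suc k}. Wf K x k z j < y})"
definition aa :: "nat \<Rightarrow> (nat \<Rightarrow> real) \<Rightarrow> nat \<Rightarrow> real" where
  "aa K x k = xb K x k + (xb K x (Suc k) - xb K x k) / 3"
definition bb :: "nat \<Rightarrow> (nat \<Rightarrow> real) \<Rightarrow> nat \<Rightarrow> real" where
  "bb K x k = xb K x k + 2 * (xb K x (Suc k) - xb K x k) / 3"
definition pt :: "nat \<Rightarrow> (nat \<Rightarrow> real) \<Rightarrow> nat \<Rightarrow> nat \<Rightarrow> real" where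
  "pt K x k j = (if j \<le> k then xb K x j else if j = Suc k then aa K x k else bb K x k)"
definition cp :: "nat \<Rightarrow> (nat \<Rightarrow> real) \<Rightarrow> nat \<Rightarrow> real \<Rightarrow> real \<Rightarrow> real" where
  "cp K x k z y = pt K x k (cc K x k z y)"
definition psi :: "nat \<Rightarrow> (nat \<Rightarrow> real) \<Rightarrow> nat \<Rightarrow> real \<Rightarrow> real \<times> bool \<Rightarrow> real \<times> bool" where
  "psi K x k z p = (cp K x k z (fst p), cp K x k z (fst p) \<le> aa K x k \<and> snd p)"
definition Ej :: "nat \<Rightarrow> (nat \<Rightarrow> real) \<Rightarrow> nat \<Rightarrow> nat \<Rightarrow> nat \<Rightarrow> real \<times> bool" where
  "Ej K x k j c = (min (pt K x k c) (if j \<le> k then xb K x j else bb K x k),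
                   if j \<le> k then c \<le> j else c \<le> Suc k)"
definition obsE :: "nat \<Rightarrow> (nat \<Rightarrow> real) \<Rightarrow> (nat \<Rightarrow> nat) \<Rightarrow> nat \<Rightarrow> (nat \<times> nat \<Rightarrow> nat) \<Rightarrow> (real \<times> bool) list" where
  "obsE K x nn k s = concat (map (\<lambda>j. map (\<lambda>i. Ej K x k j (s (j, i))) [1..<Suc (nn j)]) [1..<Suc K])"

lemma xb_in: "j \<in> {1..K} \<Longrightarrow> xb K x j = x j"
  by (simp add: xb_def)

context
  fixes K :: nat and x :: "nat \<Rightarrow> real" and k :: nat and z :: real
  assumes srt: "\<And>i j. i \<le> j \<Longrightarrow> j \<le> Suc K \<Longrightarrow> xb K x i \<le> xb K x j"
    and kK: "k \<le> K" and zl: "xb K x k \<le> z" and zu: "z < xb K x (Suc k)"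
begin

lemma W_mono: "i \<le> j \<Longrightarrow> j \<le> Suc k \<Longrightarrow> Wf K x k z i \<le> Wf K x k z j"
  unfolding Wf_def using srt[of i j] srt[of i k] kK zl by auto

lemma W_Suc_k: "Wf K x k z (Suc k) = z"
  by (simp add: Wf_def)

lemma cc_le_iff:
  assumes j: "1 \<le> j" "j \<le> Suc k"
  shows "cc K x k z y \<le> j \<longleftrightarrow> y \<le> Wf K x k z j"
proof
  assume c: "cc K x k z y \<le> j"
  show "y \<le> Wf K x k z j"
  proof (rule ccontr)
    assume "\<not> ?thesis"
    then have "{1..j} \<subseteq> {i\<in>{1..Suc k}. Wf K x k z i < y}"
      using W_mono j by fastforce
    then have "card {1..j} \<le> card {i\<in>{1..Suc k}. Wf K x k z i < y}"
      by (intro card_mono) auto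
    then show False using c unfolding cc_def by simp
  qed
next
  assume y: "y \<le> Wf K x k z j"
  have "{i\<in>{1..Suc k}. Wf K x k z i < y} \<subseteq> {1..<j}"
  proof
    fix i assume i: "i \<in> {i\<in>{1..Suc k}. Wf K x k z i < y}"
    have "\<not> j \<le> i" using W_mono[of j i] i y by auto
    then show "i \<in> {1..<j}" using i by auto
  qed
  then have "card {i\<in>{1..Suc k}. Wf K x k z i < y} \<le> card {1..<j}"
    by (intro card_mono) auto
  then show "cc K x k z y \<le> j" unfolding cc_def using j by simp
qed

lemma cc_ge1: "1 \<le> cc K x k z y"
  by (simp add: cc_def)

lemma cc_le: "cc K x k z y \<le> Suc (Suc k)"
proof -
  have "card {j\<in>{1..Suc k}. Wf K x k z j < y} \<le> card {1..Suc k}"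
    by (intro card_mono) auto
  then show ?thesis by (simp add: cc_def)
qed

lemma cc_mono: "y \<le> y' \<Longrightarrow> cc K x k z y \<le> cc K x k z y'"
  unfolding cc_def by (auto intro!: card_mono)

lemma cc_le_Suc_k: "cc K x k z y \<le> Suc k \<longleftrightarrow> y \<le> z"
  using cc_le_iff[of "Suc k" y] by (simp add: W_Suc_k)

lemma ab: "xb K x k < aa K x k" "aa K x k < bb K x k" "bb K x k < xb K x (Suc k)"
  using zl zu unfolding aa_def bb_def by (simp_all add: field_simps)

lemma Xk_le: "j \<le> k \<Longrightarrow> xb K x j \<le> xb K x k"
  using srt kK by simp

lemma pt_mono: "i \<le> j \<Longrightarrow> pt K x k i \<le> pt K x k j"
  unfolding pt_def using Xk_le[of i] Xk_le[of j] ab srt[of i j] kK by auto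

lemma pt_le_a: "1 \<le> j \<Longrightarrow> j \<le> Suc (Suc k) \<Longrightarrow> pt K x k j \<le> aa K x k \<longleftrightarrow> j \<le> Suc k"
  unfolding pt_def using Xk_le[of j] ab by auto

lemma pt_le_b: "pt K x k j \<le> bb K x k"
  unfolding pt_def using Xk_le[of j] ab by auto

lemma cp_mono: "mono (cp K x k z)"
  unfolding cp_def mono_def using cc_mono pt_mono by blast

lemma cp_le_a: "cp K x k z y \<le> aa K x k \<longleftrightarrow> y \<le> z"
  unfolding cp_def using pt_le_a[OF cc_ge1 cc_le] cc_le_Suc_k by simp

lemma cp_le_b: "cp K x k z y \<le> bb K x k"
  unfolding cp_def by (rule pt_le_b)

lemma cp_fix:
  assumes j: "1 \<le> j" "j \<le> k"
  shows "cp K x k z (xb K x j) = xb K x j"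
proof -
  define m where "m = cc K x k z (xb K x j)"
  have "m \<le> j" unfolding m_def using cc_le_iff[of j "xb K x j"] j by (simp add: Wf_def)
  moreover have "1 \<le> m" unfolding m_def by (rule cc_ge1)
  ultimately have "xb K x j \<le> Wf K x k z m" using cc_le_iff[of m "xb K x j"] j unfolding m_def by simp
  then have "xb K x j \<le> xb K x m" using \<open>m \<le> j\<close> j by (simp add: Wf_def)
  moreover have "xb K x m \<le> xb K x j" using srt[of m j] \<open>m \<le> j\<close> j kK by simp
  ultimately show ?thesis unfolding cp_def m_def[symmetric] pt_def using \<open>m \<le> j\<close> j by simp
qed

lemma cp_gt:
  assumes j: "1 \<le> j" "j \<le> k" and y: "xb K x j < y" "y \<le> z"
  shows "xb K x j < cp K x k z y"
proof -
  define m where "m = cc K x k z y"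
  have m: "1 \<le> m" "m \<le> Suc k" using cc_ge1 cc_le_Suc_k y unfolding m_def by auto
  show ?thesis
  proof (cases "m \<le> k")
    case True
    then have "y \<le> xb K x m" using cc_le_iff[of m y] m unfolding m_def by (simp add: Wf_def)
    then show ?thesis using y True unfolding cp_def m_def[symmetric] pt_def by simp
  next
    case False
    then have "m = Suc k" using m by simp
    then show ?thesis unfolding cp_def m_def[symmetric] pt_def using Xk_le[of j] j ab by simp
  qed
qed

lemma cp_big:
  assumes j: "k < j" "j \<le> K"
  shows "cp K x k z (xb K x j) = bb K x k"
proof -
  have "xb K x (Suc k) \<le> xb K x j" using srt[of "Suc k" j] j by simp
  then have "\<not> xb K x j \<le> z" using zu by simp
  then have "\<not> cc K x k z (xb K x j) \<le> Suc k" using cc_le_Suc_k by simp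
  then have "cc K x k z (xb K x j) = Suc (Suc k)" using cc_le[of "xb K x j"] by simp
  then show ?thesis unfolding cp_def pt_def by simp
qed

lemma entry_eq:
  assumes j: "j \<in> {1..K}"
  shows "psi K x k z (min y (x j), y \<le> x j) = Ej K x k j (cc K x k z y)"
proof -
  have xj: "x j = xb K x j" using xb_in[OF j] by simp
  have m: "cp K x k z (min y (x j)) = min (cp K x k z y) (cp K x k z (x j))"
    using cp_mono by (simp add: min_of_mono)
  show ?thesis
  proof (cases "j \<le> k")
    case True
    have cpx: "cp K x k z (x j) = xb K x j" using cp_fix[of j] True j xj by simp
    have "min (cp K x k z y) (xb K x j) \<le> xb K x k" using Xk_le[OF True] by simp
    then have lt: "min (cp K x k z y) (xb K x j) \<le> aa K x k" using ab by simp
    have "y \<le> x j \<longleftrightarrow> cc K x k z y \<le> j"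
      using cc_le_iff[of j y] True j xj by (simp add: Wf_def)
    then show ?thesis unfolding psi_def Ej_def using m cpx lt True by (simp add: cp_def)
  next
    case False
    have cpx: "cp K x k z (x j) = bb K x k" using cp_big[of j] False j xj by simp
    have mm: "min (cp K x k z y) (bb K x k) = cp K x k z y" using cp_le_b by (simp add: min_def)
    have "xb K x (Suc k) \<le> xb K x j" using srt[of "Suc k" j] False j by simp
    then have yz: "y \<le> z \<Longrightarrow> y \<le> x j" using zu xj by simp
    show ?thesis unfolding psi_def Ej_def using m cpx mm False cp_le_a[of y] cc_le_Suc_k[of y] yz
      by (auto simp: cp_def)
  qed
qed

lemma obs_map:
  "map (psi K x k z) (observations K x nn D) = obsE K x nn k (\<lambda>i. cc K x k z (D i))"
  unfolding observations_def obsE_def map_concat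
  by (auto intro!: arg_cong[where f=concat] simp: entry_eq)

lemma obs_mem:
  assumes "p \<in> set (observations K x nn D)"
  shows "\<exists>j\<in>{1..K}. \<exists>y. p = (min y (x j), y \<le> x j)"
  using assms unfolding observations_def by auto

lemma psi_mono_pair:
  assumes j: "j \<in> {1..K}" "j' \<in> {1..K}"
    and p: "p = (min y (x j), y \<le> x j)" and p': "p' = (min y' (x j'), y' \<le> x j')"
    and le: "gk p \<le> gk p'"
  shows "gk (psi K x k z p) \<le> gk (psi K x k z p')"
proof -
  let ?u = "fst p" and ?u' = "fst p'"
  let ?c = "cp K x k z"
  from le have cases: "?u < ?u' \<or> (?u = ?u' \<and> (\<not> snd p) \<le> (\<not> snd p'))"
    by (simp add: gk_def)
  show ?thesis
  proof (cases "?u = ?u'")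
    case True
    then have "(\<not> snd p) \<le> (\<not> snd p')" using cases by simp
    then show ?thesis using True by (auto simp: gk_def psi_def)
  next
    case False
    then have lt: "?u < ?u'" using cases by simp
    then have cle: "?c ?u \<le> ?c ?u'" using cp_mono by (simp add: mono_def)
    show ?thesis
    proof (cases "?c ?u < ?c ?u'")
      case True then show ?thesis by (simp add: gk_def psi_def)
    next
      case False
      then have ceq: "?c ?u = ?c ?u'" using cle by simp
      have "snd p" if h: "?c ?u' \<le> aa K x k" "snd p'"
      proof (rule ccontr)
        assume ns: "\<not> snd p"
        then have u: "?u = xb K x j" using p xb_in[OF j(1)] by (auto simp: min_def)
        have u'z: "?u' \<le> z" using h cp_le_a by simp
        then have "?u \<le> z" using lt by simp
        have jk: "j \<le> k"
        proof (rule ccontr)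
          assume "\<not> j \<le> k"
          then have "xb K x (Suc k) \<le> xb K x j" using srt[of "Suc k" j] j by simp
          then show False using \<open>?u \<le> z\<close> u zu by simp
        qed
        have "xb K x j < ?c ?u'" using cp_gt[of j ?u'] jk j u lt u'z by simp
        moreover have "?c ?u = xb K x j" using cp_fix[of j] jk j u by simp
        ultimately show False using ceq by simp
      qed
      then show ?thesis using ceq by (auto simp: gk_def psi_def)
    qed
  qed
qed

lemma psi_mono_obs:
  "\<forall>p\<in>set (observations K x nn D). \<forall>p'\<in>set (observations K x nn D).
     gk p \<le> gk p' \<longrightarrow> gk (psi K x k z p) \<le> gk (psi K x k z p')"
  using obs_mem psi_mono_pair by metis

lemma km_obs:
  assumes "z < 1" "aa K x k < 1"
  shows "km_cdf (observations K x nn D) z = km_cdf (obsE K x nn k (\<lambda>i. cc K x k z (D i))) (aa K x k)"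
proof -
  have "km_cdf (map (psi K x k z) (observations K x nn D)) (aa K x k) = km_cdf (observations K x nn D) z"
    by (rule km_cdf_map[OF assms(1,2) psi_mono_obs]) (auto simp: psi_def cp_le_a)
  then show ?thesis by (simp add: obs_map)
qed

end



definition Sset :: "nat \<Rightarrow> (nat \<Rightarrow> real) \<Rightarrow> (nat \<Rightarrow> nat) \<Rightarrow> nat \<Rightarrow> real \<Rightarrow> (nat \<times> nat \<Rightarrow> nat) set" where
  "Sset K x nn k q = {s \<in> PiE (dem_idx K nn) (\<lambda>_. {1..Suc (Suc k)}). q \<le> km_cdf (obsE K x nn k s) (aa K x k)}"

definition wv :: "nat \<Rightarrow> (nat \<Rightarrow> real) \<Rightarrow> real \<Rightarrow> nat \<Rightarrow> real" where
  "wv k v t j = (if j = 0 then 0 else if j \<le> k then v j else if j = Suc k then t else 1)"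

definition Lo :: "nat \<Rightarrow> (nat \<Rightarrow> real) \<Rightarrow> nat \<Rightarrow> real \<Rightarrow> nat \<Rightarrow> real set" where
  "Lo K x k z j = (if j = 0 then {} else if j \<le> Suc k then {..Wf K x k z j} else UNIV)"

lemma finite_dem_idx: "finite (dem_idx K nn)"
proof -
  have "dem_idx K nn = Sigma {1..K} (\<lambda>k. {1..nn k})" by (auto simp: dem_idx_def)
  then show ?thesis by simp
qed

lemma finite_Sset: "finite (Sset K x nn k q)"
  unfolding Sset_def by (rule finite_subset[OF _ finite_PiE[OF finite_dem_idx, where T="\<lambda>_. {1..Suc (Suc k)}"]]) (auto simp: PiE_def)

lemma obsE_cong:
  assumes "\<And>i. i \<in> dem_idx K nn \<Longrightarrow> s i = s' i"
  shows "obsE K x nn k s = obsE K x nn k s'"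
  unfolding obsE_def using assms by (auto intro!: arg_cong[where f=concat] simp: dem_idx_def)

context
  fixes K :: nat and x :: "nat \<Rightarrow> real" and k :: nat and z :: real
  assumes srt: "\<And>i j. i \<le> j \<Longrightarrow> j \<le> Suc K \<Longrightarrow> xb K x i \<le> xb K x j"
    and kK: "k \<le> K" and zl: "xb K x k \<le> z" and zu: "z < xb K x (Suc k)"
begin

lemma Lo_iff: "j \<le> Suc (Suc k) \<Longrightarrow> y \<in> Lo K x k z j \<longleftrightarrow> cc K x k z y \<le> j"
  unfolding Lo_def using cc_le_iff[OF srt kK zl zu, of j y] cc_ge1[OF srt kK zl zu, of y] cc_le[OF srt kK zl zu, of y]
  by auto

lemma cell_eq: "1 \<le> m \<Longrightarrow> m \<le> Suc (Suc k) \<Longrightarrow> {y. cc K x k z y = m} = Lo K x k z m - Lo K x k z (m - 1)"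
  using Lo_iff by fastforce

lemma Lo_sub: "1 \<le> m \<Longrightarrow> m \<le> Suc (Suc k) \<Longrightarrow> Lo K x k z (m - 1) \<subseteq> Lo K x k z m"
  using Lo_iff by fastforce

lemma Lo_sets: "Lo K x k z j \<in> sets borel"
  unfolding Lo_def by auto

lemma z01: "0 \<le> z" "z < 1" "aa K x k < 1"
proof -
  have "xb K x 0 \<le> xb K x k" using srt kK by simp
  then show "0 \<le> z" using zl by (simp add: xb_def)
  have "xb K x (Suc k) \<le> xb K x (Suc K)" using srt kK by simp
  then show "z < 1" "aa K x k < 1" using zu ab[OF srt kK zl zu] by (auto simp: xb_def)
qed

lemma prob_main:
  assumes M: "is_demand_dist M" and q: "q \<le> 1"
  shows "measure (PiM (dem_idx K nn) (\<lambda>_. M))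
           {D \<in> space (PiM (dem_idx K nn) (\<lambda>_. M)). km_policy q (observations K x nn D) \<le> z}
         = (\<Sum>s\<in>Sset K x nn k q. \<Prod>i\<in>dem_idx K nn.
              wv k (\<lambda>j. if j \<in> {1..k} then cdf_of M (x j) else 0) (cdf_of M z) (s i)
            - wv k (\<lambda>j. if j \<in> {1..k} then cdf_of M (x j) else 0) (cdf_of M z) (s i - 1))"
proof -
  let ?I = "dem_idx K nn"
  let ?P = "PiM ?I (\<lambda>_. M)"
  let ?S = "Sset K x nn k q"
  let ?c = "cc K x k z"
  let ?C = "\<lambda>m. {y. ?c y = m}"
  let ?v = "\<lambda>j. if j \<in> {1..k} then cdf_of M (x j) else 0"
  interpret M: prob_space M using M by (simp add: is_demand_dist_def)
  have setsM: "sets M = sets borel" using M by (simp add: is_demand_dist_def)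
  have spM: "space M = UNIV" using sets_eq_imp_space_eq[OF setsM] by simp
  interpret P: product_prob_space "\<lambda>_. M" ?I by unfold_locales
  have PPp: "prob_space ?P" by (rule prob_space_PiM) (rule M.prob_space_axioms)
  then have finP: "finite_measure ?P" by (simp add: prob_space_def)
  have spP: "space ?P = PiE ?I (\<lambda>_. UNIV)" by (simp add: space_PiM spM)
  have Csets: "?C m \<in> sets M" if "m \<in> {1..Suc (Suc k)}" for m
    using that cell_eq[of m] Lo_sets setsM by auto
  define B where "B s = {D \<in> space ?P. \<forall>i\<in>?I. D i \<in> ?C (s i)}" for s
  have ev: "{D \<in> space ?P. km_policy q (observations K x nn D) \<le> z} = (\<Union>s\<in>?S. B s)"
  proof (intro set_eqI iffI)
    fix D assume D: "D \<in> {D \<in> space ?P. km_policy q (observations K x nn D) \<le> z}"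
    define s where "s = restrict (\<lambda>i. ?c (D i)) ?I"
    have "q \<le> km_cdf (observations K x nn D) z" using D km_policy_iff[OF z01(1,2) q] by simp
    then have "q \<le> km_cdf (obsE K x nn k (\<lambda>i. ?c (D i))) (aa K x k)"
      using km_obs[OF srt kK zl zu z01(2,3)] by simp
    also have "obsE K x nn k (\<lambda>i. ?c (D i)) = obsE K x nn k s"
      by (rule obsE_cong) (simp add: s_def)
    finally have "s \<in> ?S" unfolding Sset_def s_def
      using cc_ge1[OF srt kK zl zu] cc_le[OF srt kK zl zu] by auto
    moreover have "D \<in> B s" using D unfolding B_def s_def by auto
    ultimately show "D \<in> (\<Union>s\<in>?S. B s)" by blast
  next
    fix D assume "D \<in> (\<Union>s\<in>?S. B s)"
    then obtain s where s: "s \<in> ?S" and D: "D \<in> B s" by blast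
    have "obsE K x nn k s = obsE K x nn k (\<lambda>i. ?c (D i))"
      by (rule obsE_cong) (use D in \<open>auto simp: B_def\<close>)
    then have "q \<le> km_cdf (obsE K x nn k (\<lambda>i. ?c (D i))) (aa K x k)" using s by (simp add: Sset_def)
    then have "q \<le> km_cdf (observations K x nn D) z"
      using km_obs[OF srt kK zl zu z01(2,3)] by simp
    then show "D \<in> {D \<in> space ?P. km_policy q (observations K x nn D) \<le> z}"
      using D km_policy_iff[OF z01(1,2) q] by (simp add: B_def)
  qed
  have Bsets: "B s \<in> sets ?P" if "s \<in> ?S" for s
  proof -
    have "B s = PiE ?I (\<lambda>i. ?C (s i))" unfolding B_def spP by (auto simp: PiE_def Pi_def)
    also have "\<dots> \<in> sets ?P" using that Csets
      by (intro sets_PiM_I_finite[OF finite_dem_idx]) (auto simp: Sset_def PiE_def Pi_def)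
    finally show ?thesis .
  qed
  have disj: "disjoint_family_on B ?S"
    unfolding disjoint_family_on_def
  proof (intro ballI impI)
    fix s t assume st: "s \<in> ?S" "t \<in> ?S" "s \<noteq> t"
    have "\<exists>i\<in>?I. s i \<noteq> t i"
    proof (rule ccontr)
      assume "\<not> ?thesis"
      then have "s = t" using st(1,2) by (intro PiE_ext[of s ?I _ t]) (auto simp: Sset_def)
      then show False using st(3) by simp
    qed
    then obtain i where i: "i \<in> ?I" "s i \<noteq> t i" by blast
    then show "B s \<inter> B t = {}" unfolding B_def by auto
  qed
  have "measure ?P (\<Union>s\<in>?S. B s) = (\<Sum>s\<in>?S. measure ?P (B s))"
    by (rule measure_finite_Union[OF finite_Sset]) (use Bsets disj finite_measure.emeasure_finite[OF finP] in auto)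
  also have "\<dots> = (\<Sum>s\<in>?S. \<Prod>i\<in>?I. wv k ?v (cdf_of M z) (s i) - wv k ?v (cdf_of M z) (s i - 1))"
  proof (rule sum.cong[OF refl])
    fix s assume s: "s \<in> ?S"
    have sr: "s i \<in> {1..Suc (Suc k)}" if "i \<in> ?I" for i using s that by (auto simp: Sset_def)
    have "emeasure ?P (B s) = (\<Prod>i\<in>?I. emeasure M (?C (s i)))"
      unfolding B_def by (rule P.emeasure_PiM_Collect) (use finite_dem_idx Csets sr in auto)
    also have "\<dots> = ennreal (\<Prod>i\<in>?I. measure M (?C (s i)))"
      by (simp add: M.emeasure_eq_measure prod_ennreal)
    finally have "measure ?P (B s) = (\<Prod>i\<in>?I. measure M (?C (s i)))"
      by (simp add: finite_measure.emeasure_eq_measure[OF finP] prod_nonneg)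
    also have "\<dots> = (\<Prod>i\<in>?I. wv k ?v (cdf_of M z) (s i) - wv k ?v (cdf_of M z) (s i - 1))"
    proof (rule prod.cong[OF refl])
      fix i assume "i \<in> ?I"
      then have m: "1 \<le> s i" "s i \<le> Suc (Suc k)" using sr by auto
      have mL: "measure M (Lo K x k z j) = wv k ?v (cdf_of M z) j" if jle: "j \<le> Suc (Suc k)" for j
      proof -
        have "j = 0 \<or> (1 \<le> j \<and> j \<le> k) \<or> j = Suc k \<or> j = Suc (Suc k)" using jle by linarith
        then consider "j = 0" | "1 \<le> j" "j \<le> k" | "j = Suc k" | "j = Suc (Suc k)" by blast
        then show ?thesis
        proof cases
          case 1 then show ?thesis by (simp add: Lo_def wv_def)
        next
          case 2
          then have "x j = xb K x j" using kK by (simp add: xb_def)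
          then show ?thesis using 2 by (simp add: Lo_def wv_def Wf_def cdf_of_def atMost_def)
        next
          case 3 then show ?thesis by (simp add: Lo_def wv_def Wf_def cdf_of_def atMost_def)
        next
          case 4 then show ?thesis using M.prob_space spM by (simp add: Lo_def wv_def)
        qed
      qed
      have "measure M (?C (s i)) = measure M (Lo K x k z (s i) - Lo K x k z (s i - 1))"
        using cell_eq[OF m] by simp
      also have "\<dots> = measure M (Lo K x k z (s i)) - measure M (Lo K x k z (s i - 1))"
        by (rule M.finite_measure_Diff) (use Lo_sets setsM Lo_sub[OF m] in auto)
      also have "\<dots> = wv k ?v (cdf_of M z) (s i) - wv k ?v (cdf_of M z) (s i - 1)"
        using mL m by simp
      finally show "measure M (?C (s i)) = wv k ?v (cdf_of M z) (s i) - wv k ?v (cdf_of M z) (s i - 1)" .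
    qed
    finally show "measure ?P (B s) = (\<Prod>i\<in>?I. wv k ?v (cdf_of M z) (s i) - wv k ?v (cdf_of M z) (s i - 1))" .
  qed
  finally show ?thesis using ev by simp
qed

end



lemma x_mono:
  fixes x :: "nat \<Rightarrow> real"
  assumes "\<forall>k\<in>{1..<K}. x k \<le> x (Suc k)" "1 \<le> i" "i \<le> j" "j \<le> K"
  shows "x i \<le> x j"
  using assms(3,4)
proof (induction j rule: dec_induct)
  case base then show ?case by simp
next
  case (step n)
  then have "x n \<le> x (Suc n)" using assms(1,2) by auto
  with step show ?case by simp
qed

lemma xb_sorted:
  fixes x :: "nat \<Rightarrow> real"
  assumes "K \<ge> 1" "0 \<le> x 1" "\<forall>k\<in>{1..<K}. x k \<le> x (Suc k)" "x K \<le> 1"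
    and "i \<le> j" "j \<le> Suc K"
  shows "xb K x i \<le> xb K x j"
proof -
  have xm: "x a \<le> x b" if "1 \<le> a" "a \<le> b" "b \<le> K" for a b using x_mono[OF assms(3) that] .
  show ?thesis
  proof (cases "i = 0")
    case True
    then show ?thesis using assms xm[of 1 j] by (auto simp: xb_def)
  next
    case False
    then show ?thesis using assms xm[of i j] xm[of i K] by (auto simp: xb_def)
  qed
qed

lemma cont_coord: "continuous_on A (\<lambda>p::(nat \<Rightarrow> real) \<times> real. fst p m)"
  by (rule continuous_on_compose2[OF continuous_on_product_coordinates continuous_on_fst]) auto

lemma cont_wv: "continuous_on A (\<lambda>p::(nat \<Rightarrow> real) \<times> real. wv k (fst p) (snd p) m)"
  unfolding wv_def
  by (cases "m = 0"; cases "m \<le> k"; cases "m = Suc k") (auto intro: cont_coord continuous_on_snd)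

theorem lemma6:
  fixes cu co :: real and K :: nat and x :: "nat \<Rightarrow> real" and nn :: "nat \<Rightarrow> nat"
  assumes "cu > 0" and "co > 0" and "K \<ge> 1"
    and "0 \<le> x 1" and "\<forall>k\<in>{1..<K}. x k \<le> x (Suc k)" and "x K \<le> 1"
  shows "\<forall>k\<in>{0..K}. \<exists>P :: (nat \<Rightarrow> real) \<times> real \<Rightarrow> real.
           continuous_on (pw_dom k) P \<and> P ` pw_dom k \<subseteq> {0..1} \<and>
           (\<forall>M. is_demand_dist M \<longrightarrow>
              (\<forall>z. xb K x k \<le> z \<and> z < xb K x (Suc k) \<longrightarrow>
                 measure (PiM (dem_idx K nn) (\<lambda>_. M))
                   {D \<in> space (PiM (dem_idx K nn) (\<lambda>_. M)).
                      km_policy (cu / (cu + co)) (observations K x nn D) \<le> z}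
                 = P (\<lambda>j. if j \<in> {1..k} then cdf_of M (x j) else 0, cdf_of M z)))"
proof
  fix k assume k: "k \<in> {0..K}"
  define q where "q = cu / (cu + co)"
  have q1: "q \<le> 1" unfolding q_def using assms(1,2) by simp
  have srt: "\<And>i j. i \<le> j \<Longrightarrow> j \<le> Suc K \<Longrightarrow> xb K x i \<le> xb K x j"
    using xb_sorted[OF assms(3,4,5,6)] by blast
  define P where "P = (\<lambda>p::(nat \<Rightarrow> real) \<times> real. max 0 (min 1
      (\<Sum>s\<in>Sset K x nn k q. \<Prod>i\<in>dem_idx K nn.
          wv k (fst p) (snd p) (s i) - wv k (fst p) (snd p) (s i - 1))))"
  show "\<exists>P :: (nat \<Rightarrow> real) \<times> real \<Rightarrow> real.
           continuous_on (pw_dom k) P \<and> P ` pw_dom k \<subseteq> {0..1} \<and>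
           (\<forall>M. is_demand_dist M \<longrightarrow>
              (\<forall>z. xb K x k \<le> z \<and> z < xb K x (Suc k) \<longrightarrow>
                 measure (PiM (dem_idx K nn) (\<lambda>_. M))
                   {D \<in> space (PiM (dem_idx K nn) (\<lambda>_. M)).
                      km_policy (cu / (cu + co)) (observations K x nn D) \<le> z}
                 = P (\<lambda>j. if j \<in> {1..k} then cdf_of M (x j) else 0, cdf_of M z)))"
  proof (intro exI conjI allI impI)
    show "continuous_on (pw_dom k) P"
      unfolding P_def
      by (intro continuous_intros cont_wv)
    show "P ` pw_dom k \<subseteq> {0..1}" unfolding P_def by auto
  next
    fix M z
    assume M: "is_demand_dist M" and z: "xb K x k \<le> z \<and> z < xb K x (Suc k)"
    have kK: "k \<le> K" using k by simp
    let ?m = "measure (PiM (dem_idx K nn) (\<lambda>_. M))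
                   {D \<in> space (PiM (dem_idx K nn) (\<lambda>_. M)). km_policy q (observations K x nn D) \<le> z}"
    have eq: "?m = (\<Sum>s\<in>Sset K x nn k q. \<Prod>i\<in>dem_idx K nn.
              wv k (\<lambda>j. if j \<in> {1..k} then cdf_of M (x j) else 0) (cdf_of M z) (s i)
            - wv k (\<lambda>j. if j \<in> {1..k} then cdf_of M (x j) else 0) (cdf_of M z) (s i - 1))"
      by (rule prob_main[OF srt kK conjunct1[OF z] conjunct2[OF z] M q1])
    have "prob_space (PiM (dem_idx K nn) (\<lambda>_. M))"
      by (rule prob_space_PiM) (use M in \<open>simp add: is_demand_dist_def\<close>)
    then have "0 \<le> ?m" "?m \<le> 1" by (simp_all add: prob_space.prob_le_1)
    then show "measure (PiM (dem_idx K nn) (\<lambda>_. M))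
                   {D \<in> space (PiM (dem_idx K nn) (\<lambda>_. M)).
                      km_policy (cu / (cu + co)) (observations K x nn D) \<le> z}
                 = P (\<lambda>j. if j \<in> {1..k} then cdf_of M (x j) else 0, cdf_of M z)"
      unfolding q_def[symmetric] P_def using eq by simp
  qed
qed

end
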